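(* Let $G=(V,E)$ be a connected graph with $V=\{1,\ldots,n\}$, $\mathbf{w}\colon E\to\{1,\ldots,N\}$, $w,\ell\in\mathbb{N}$ with $\ell$ even and $\ell\le n$, and let $\mathcal{T}$ be an elimination tree of $G$ with root $r$. Write $P_{(r)}(\emptyset)=\sum_{a,b,c,d}\alpha_{a,b,c,d}\,x^ay^bz^c\omega^d$. Then $|\mathcal{M}_{w,\ell}|=\alpha_{\ell/2,\ell/2,n-\ell,w}$.
   Context: Two matchings $M_1,M_2$ are consistent if $M_1\cap M_2=\emptyset$ and $V(M_1)=V(M_2)$ ($V(M)$ = set of endpoints of edges of $M$). $\mathcal{M}_{w,\ell}$ is the set of ordered pairs $(M_1,M_2)$ of consistent matchings in $G$ with $|M_1|=|M_2|=\ell/2$ and $\mathbf{w}(M_1\cup M_2)=w$, where $\mathbf{w}(F)=\sum_{e\in F}\mathbf{w}(e)$. An elimination tree of $G$ is a rooted tree on vertex set $V$ such that for every edge $\{u,v\}\in E$ one of $u,v$ is an ancestor of the other. $\mathtt{tree}[v]$ is the set of nodes of the subtree rooted at $v$ (including $v$). For $W\subseteq V$ let $W^+=\{u,u+n\mid u\in W\}$; $\delta[U]=\{e\in E\mid e\cap U\ne\emptyset\}$. Define $\mathtt{tpl}(W)=\{(E_1,E_2,L)\mid E_1,E_2\subseteq\delta[W],\ L\subseteq W,\ E_1\cap E_2=\emptyset\}$; $\mathtt{mon}(E_1,E_2,L)=x^{|E_1|}y^{|E_2|}z^{|L|}\omega^{\mathbf{w}(E_1\cup E_2)}$; for $I\subseteq[2n]$,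 $\mathtt{dsj}(I)$ is the set of triples $(E_1,E_2,L)$ with $\{s,t\}\cap I=\emptyset$ for all $\{s,t\}\in E_1$, $\{s+n,t+n\}\cap I=\emptyset$ for all $\{s,t\}\in E_2$, and $L^+\cap I=\emptyset$. With Iverson bracket $[\cdot]$, for the root $r$ (whose ancestor set excluding itself is empty), $$P_{(r)}(\emptyset)=\sum_{(E_1,E_2,L)\in\mathtt{tpl}(\mathtt{tree}[r])}\mathtt{mon}(E_1,E_2,L)\sum_{K\subseteq(\mathtt{tree}[r])^+}(-1)^{|K|}[(E_1,E_2,L)\in\mathtt{dsj}(K)]\in\mathbb{Z}[x,y,z,\omega].$$ *)

theory Defs
  imports Main
begin

definition simple_graph :: "nat set \<Rightarrow> nat set set \<Rightarrow> bool" where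
  "simple_graph V E \<longleftrightarrow> (\<forall>e\<in>E. card e = 2 \<and> e \<subseteq> V)"

inductive reach :: "nat set set \<Rightarrow> nat \<Rightarrow> nat \<Rightarrow> bool" for E where
  reach_refl: "reach E u u"
| reach_step: "reach E u v \<Longrightarrow> {v, x} \<in> E \<Longrightarrow> reach E u x"

definition connected_graph :: "nat set \<Rightarrow> nat set set \<Rightarrow> bool" where
  "connected_graph V E \<longleftrightarrow> (\<forall>u\<in>V. \<forall>v\<in>V. reach E u v)"

definition rooted_tree :: "nat set \<Rightarrow> (nat \<Rightarrow> nat) \<Rightarrow> nat \<Rightarrow> bool" where
  "rooted_tree V par r \<longleftrightarrow> r \<in> V \<and> par r = r \<and> (\<forall>v\<in>V. par v \<in> V)
     \<and> (\<forall>v\<in>V. \<exists>k. (par ^^ k) v = r)"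

definition ancestor :: "(nat \<Rightarrow> nat) \<Rightarrow> nat \<Rightarrow> nat \<Rightarrow> bool" where
  "ancestor par u v \<longleftrightarrow> (\<exists>k. (par ^^ k) v = u)"

definition elimination_tree :: "nat set \<Rightarrow> nat set set \<Rightarrow> (nat \<Rightarrow> nat) \<Rightarrow> nat \<Rightarrow> bool" where
  "elimination_tree V E par r \<longleftrightarrow> rooted_tree V par r \<and>
     (\<forall>u v. {u, v} \<in> E \<longrightarrow> ancestor par u v \<or> ancestor par v u)"

definition subtree :: "nat set \<Rightarrow> (nat \<Rightarrow> nat) \<Rightarrow> nat \<Rightarrow> nat set" where
  "subtree V par v = {u \<in> V. ancestor par v u}"

definition matching :: "nat set set \<Rightarrow> nat set set \<Rightarrow> bool" where
  "matching E M \<longleftrightarrow> M \<subseteq> E \<and> (\<forall>e\<in>M. \<forall>f\<in>M. e \<noteq> f \<longrightarrow> e \<inter> f = {})"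

definition consistent :: "nat set set \<Rightarrow> nat set set \<Rightarrow> bool" where
  "consistent M1 M2 \<longleftrightarrow> M1 \<inter> M2 = {} \<and> \<Union> M1 = \<Union> M2"

definition wsum :: "(nat set \<Rightarrow> nat) \<Rightarrow> nat set set \<Rightarrow> nat" where
  "wsum wt F = (\<Sum>e\<in>F. wt e)"

definition Mwl :: "nat set set \<Rightarrow> (nat set \<Rightarrow> nat) \<Rightarrow> nat \<Rightarrow> nat \<Rightarrow> (nat set set \<times> nat set set) set" where
  "Mwl E wt w l = {(M1, M2). matching E M1 \<and> matching E M2 \<and> consistent M1 M2
      \<and> card M1 = l div 2 \<and> card M2 = l div 2 \<and> wsum wt (M1 \<union> M2) = w}"

definition plus_set :: "nat \<Rightarrow> nat set \<Rightarrow> nat set" where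
  "plus_set n W = W \<union> (\<lambda>u. u + n) ` W"

definition delta :: "nat set set \<Rightarrow> nat set \<Rightarrow> nat set set" where
  "delta E U = {e \<in> E. e \<inter> U \<noteq> {}}"

definition tpl :: "nat set set \<Rightarrow> nat set \<Rightarrow> (nat set set \<times> nat set set \<times> nat set) set" where
  "tpl E W = {(E1, E2, L). E1 \<subseteq> delta E W \<and> E2 \<subseteq> delta E W \<and> L \<subseteq> W \<and> E1 \<inter> E2 = {}}"

definition dsj :: "nat \<Rightarrow> nat set \<Rightarrow> (nat set set \<times> nat set set \<times> nat set) set" where
  "dsj n I = {(E1, E2, L). (\<forall>e\<in>E1. e \<inter> I = {}) \<and> (\<forall>e\<in>E2. (\<lambda>s. s + n) ` e \<inter> I = {})
       \<and> plus_set n L \<inter> I = {}}"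

(* P_(r)(emptyset), represented by its coefficient function: the coefficient of
   x^a y^b z^c omega^d. *)
definition P_root_coeff :: "nat \<Rightarrow> nat set \<Rightarrow> nat set set \<Rightarrow> (nat set \<Rightarrow> nat) \<Rightarrow> (nat \<Rightarrow> nat) \<Rightarrow> nat
     \<Rightarrow> nat \<Rightarrow> nat \<Rightarrow> nat \<Rightarrow> nat \<Rightarrow> int" where
  "P_root_coeff n V E wt par r a b c d =
     (\<Sum>(E1, E2, L) \<in> {(E1, E2, L) \<in> tpl E (subtree V par r).
          card E1 = a \<and> card E2 = b \<and> card L = c \<and> wsum wt (E1 \<union> E2) = d}.
        (\<Sum>K \<in> Pow (plus_set n (subtree V par r)).
            (-1) ^ card K * (if (E1, E2, L) \<in> dsj n K then 1 else 0)))"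

end

theory Submission
  imports Defs
begin

lemma alt_sum_pow:
  assumes "finite S"
  shows "(\<Sum>K\<in>Pow S. (-1::int) ^ card K) = (if S = {} then 1 else 0)"
proof (cases "S = {}")
  case False
  then have "{} \<subset> S" by auto
  from card_subsupersets_even_odd[OF assms this]
  have "card {x. x \<in> Pow S \<and> even (card x)} = card {x. x \<in> Pow S \<and> odd (card x)}" by simp
  from sum_alternating_cancels[OF _ this] assms False show ?thesis by simp
qed simp

lemma alt_sum_disj:
  assumes "finite A"
  shows "(\<Sum>K\<in>Pow A. (-1::int) ^ card K * (if K \<inter> U = {} then 1 else 0)) = (if A \<subseteq> U then 1 else 0)"
proof -
  have "(\<Sum>K\<in>Pow A. (-1::int) ^ card K * (if K \<inter> U = {} then 1 else 0))
      = (\<Sum>K\<in>{K\<in>Pow A. K \<inter> U = {}}. (-1::int) ^ card K)"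
    by (simp add: sum.inter_filter[symmetric] assms if_distrib cong: if_cong)
  also have "{K\<in>Pow A. K \<inter> U = {}} = Pow (A - U)" by auto
  also have "(\<Sum>K\<in>Pow (A - U). (-1::int) ^ card K) = (if A - U = {} then 1 else 0)"
    using alt_sum_pow[of "A - U"] assms by simp
  finally show ?thesis by auto
qed

lemma card_Union_matching:
  assumes "matching E M" "\<forall>e\<in>E. card e = 2" "finite M"
  shows "card (\<Union>M) = 2 * card M"
proof -
  have "pairwise disjnt M" using assms(1) unfolding matching_def pairwise_def disjnt_def by blast
  moreover have "\<And>A. A \<in> M \<Longrightarrow> finite A" using assms unfolding matching_def
    by (metis card.infinite subsetD zero_neq_numeral)
  ultimately have "card (\<Union>M) = sum card M" by (rule card_Union_disjoint)
  also have "\<dots> = sum (\<lambda>_. 2) M" using assms unfolding matching_def by (intro sum.cong) auto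
  finally show ?thesis by simp
qed

lemma matching_of_card:
  assumes "M \<subseteq> E" "\<forall>e\<in>E. card e = 2" "finite M" "card (\<Union>M) \<ge> 2 * card M"
  shows "matching E M"
  unfolding matching_def
proof (intro conjI ballI impI)
  show "M \<subseteq> E" by fact
  fix e f assume ef: "e \<in> M" "f \<in> M" "e \<noteq> f"
  have finM: "\<And>A. A \<in> M \<Longrightarrow> finite A" using assms
    by (metis card.infinite subsetD zero_neq_numeral)
  show "e \<inter> f = {}"
  proof (rule ccontr)
    assume "e \<inter> f \<noteq> {}"
    then obtain x where x: "x \<in> e" "x \<in> f" by auto
    have "\<Union>M \<subseteq> \<Union>(M - {e}) \<union> (e - {x})" using x ef by auto
    hence "card (\<Union>M) \<le> card (\<Union>(M - {e}) \<union> (e - {x}))"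
      by (intro card_mono) (use assms ef finM in auto)
    also have "\<dots> \<le> card (\<Union>(M - {e})) + card (e - {x})" by (rule card_Un_le)
    also have "card (\<Union>(M - {e})) \<le> sum card (M - {e})" by (rule card_Union_le_sum_card)
    also have "sum card (M - {e}) = 2 * card (M - {e})"
      using assms by (simp add: subset_iff)
    also have "card (e - {x}) = 1" using assms ef x by auto
    also have "card (M - {e}) = card M - 1" using ef assms by simp
    finally have "card (\<Union>M) \<le> 2 * (card M - 1) + 1" by simp
    moreover have "card M \<ge> 1" using ef assms by (metis card_0_eq empty_iff less_one not_le)
    ultimately show False using assms(4) by linarith
  qed
qed


theorem lemma7:
  fixes n N :: nat and E :: "nat set set" and wt :: "nat set \<Rightarrow> nat"
    and w l :: nat and par :: "nat \<Rightarrow> nat" and r :: nat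
  assumes "simple_graph {1..n} E"
    and "connected_graph {1..n} E"
    and "\<forall>e\<in>E. wt e \<in> {1..N}"
    and "even l" and "l \<le> n"
    and "elimination_tree {1..n} E par r"
  shows "int (card (Mwl E wt w l)) = P_root_coeff n {1..n} E wt par r (l div 2) (l div 2) (n - l) w"
proof -
  define V where "V = {1..n}"
  define k where "k = l div 2"
  have l2k: "l = 2 * k" using assms(4) unfolding k_def by simp
  have Esub: "\<And>e. e \<in> E \<Longrightarrow> e \<subseteq> V" and E2: "\<forall>e\<in>E. card e = 2"
    using assms(1) unfolding simple_graph_def V_def by auto
  have finV: "finite V" unfolding V_def by simp
  have cardV: "card V = n" unfolding V_def by simp
  have fE: "finite E" using Esub finV
    by (metis Pow_iff finite_Pow_iff finite_subset subsetI)
  have sub: "subtree V par r = V"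
    using assms(6) unfolding subtree_def elimination_tree_def rooted_tree_def ancestor_def V_def
    by auto
  have del: "delta E V = E"
  proof -
    have "\<forall>e\<in>E. e \<noteq> {}" using E2 by (metis card.empty zero_neq_numeral)
    thus ?thesis unfolding delta_def using Esub by blast
  qed
  have UE: "\<And>F. F \<subseteq> E \<Longrightarrow> \<Union>F \<subseteq> V" using Esub by auto
  define T where "T = {(E1, E2, L) \<in> tpl E V.
          card E1 = k \<and> card E2 = k \<and> card L = n - l \<and> wsum wt (E1 \<union> E2) = w}"
  define cover where "cover = (\<lambda>(E1::nat set set, E2::nat set set, L::nat set). V \<subseteq> \<Union>E1 \<union> L \<and> V \<subseteq> \<Union>E2 \<union> L)"
  have inner: "(\<Sum>K \<in> Pow (plus_set n V).
            (-1::int) ^ card K * (if (E1, E2, L) \<in> dsj n K then 1 else 0)) = (if cover (E1, E2, L) then 1 else 0)"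
    if t: "(E1, E2, L) \<in> tpl E V" for E1 E2 L
  proof -
    define U where "U = \<Union>E1 \<union> (\<lambda>s. s + n) ` \<Union>E2 \<union> plus_set n L"
    have "\<And>K. ((E1, E2, L) \<in> dsj n K) = (K \<inter> U = {})"
      by (auto simp: dsj_def U_def)
    hence "(\<Sum>K \<in> Pow (plus_set n V).
            (-1::int) ^ card K * (if (E1, E2, L) \<in> dsj n K then 1 else 0))
         = (\<Sum>K \<in> Pow (plus_set n V). (-1::int) ^ card K * (if K \<inter> U = {} then 1 else 0))"
      by simp
    also have "\<dots> = (if plus_set n V \<subseteq> U then 1 else 0)"
      by (rule alt_sum_disj) (simp add: plus_set_def finV)
    also have "(plus_set n V \<subseteq> U) = cover (E1, E2, L)"
    proof -
      have s1: "\<Union>E1 \<subseteq> V" "\<Union>E2 \<subseteq> V" "L \<subseteq> V"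
        using t UE unfolding tpl_def del by auto
      show ?thesis
      proof
        assume h: "plus_set n V \<subseteq> U"
        have a: "V \<subseteq> \<Union>E1 \<union> L"
        proof
          fix x assume "x \<in> V"
          hence "x \<in> U" "x \<ge> 1" "x \<le> n" using h unfolding plus_set_def V_def by auto
          thus "x \<in> \<Union>E1 \<union> L" unfolding U_def plus_set_def using s1 unfolding V_def by auto
        qed
        have b: "V \<subseteq> \<Union>E2 \<union> L"
        proof
          fix x assume "x \<in> V"
          hence "x + n \<in> U" "x \<ge> 1" "x \<le> n" using h unfolding plus_set_def V_def by auto
          thus "x \<in> \<Union>E2 \<union> L" unfolding U_def plus_set_def using s1 unfolding V_def by auto
        qed
        show "cover (E1, E2, L)" using a b unfolding cover_def by simp
      next
        assume "cover (E1, E2, L)"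
        hence a: "V \<subseteq> \<Union>E1 \<union> L" and b: "V \<subseteq> \<Union>E2 \<union> L" unfolding cover_def by auto
        from image_mono[OF b, of "\<lambda>u. u + n"]
        have "(\<lambda>u. u + n) ` V \<subseteq> (\<lambda>s. s + n) ` \<Union>E2 \<union> (\<lambda>u. u + n) ` L"
          by (simp add: image_Un)
        thus "plus_set n V \<subseteq> U" using a unfolding U_def plus_set_def by blast
      qed
    qed
    finally show ?thesis .
  qed
  have "P_root_coeff n {1..n} E wt par r k k (n - l) w = (\<Sum>t\<in>T. if cover t then 1 else 0)"
    unfolding P_root_coeff_def V_def[symmetric] sub T_def
    by (intro sum.cong refl) (use inner in auto)
  also have "\<dots> = int (card {t\<in>T. cover t})"
  proof -
    have "T \<subseteq> Pow E \<times> Pow E \<times> Pow V" unfolding T_def tpl_def del by auto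
    hence "finite T" by (rule finite_subset) (simp add: fE finV)
    moreover have "T \<inter> Collect cover = {t\<in>T. cover t}" by auto
    ultimately show ?thesis by (simp add: sum.If_cases)
  qed
  also have "{t\<in>T. cover t} = (\<lambda>(M1, M2). (M1, M2, V - \<Union>M1)) ` Mwl E wt w l"
  proof (intro equalityI subsetI)
    fix t assume "t \<in> {t\<in>T. cover t}"
    then obtain E1 E2 L where t: "t = (E1, E2, L)" "(E1, E2, L) \<in> T" "cover (E1, E2, L)"
      by (cases t) auto
    have s: "E1 \<subseteq> E" "E2 \<subseteq> E" "L \<subseteq> V" "E1 \<inter> E2 = {}" "card E1 = k" "card E2 = k"
      "card L = n - l" "wsum wt (E1 \<union> E2) = w"
      using t(2) unfolding T_def tpl_def del by auto
    have cv: "V \<subseteq> \<Union>E1 \<union> L" "V \<subseteq> \<Union>E2 \<union> L" using t(3) unfolding cover_def by auto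
    have key: "matching E F \<and> \<Union>F = V - L" if F: "F \<subseteq> E" "card F = k" "V \<subseteq> \<Union>F \<union> L" for F
    proof -
      have UF: "\<Union>F \<subseteq> V" using UE F by auto
      have fF: "finite F" using F fE finite_subset by blast
      have fU: "finite (\<Union>F)" using UF finV finite_subset by blast
      have fL: "finite L" using s finV finite_subset by blast
      have eqV: "\<Union>F \<union> L = V" using UF s F by auto
      have "card (\<Union>F) \<le> sum card F" by (rule card_Union_le_sum_card)
      also have "sum card F = 2 * k" using F E2 by (simp add: subset_iff)
      finally have c1: "card (\<Union>F) \<le> 2 * k" .
      have "card (\<Union>F) + card L = card (\<Union>F \<union> L) + card (\<Union>F \<inter> L)"
        by (rule card_Un_Int[OF fU fL])
      hence "card (\<Union>F) + (n - l) = n + card (\<Union>F \<inter> L)" using eqV cardV s by simp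
      hence c2: "card (\<Union>F) = 2 * k" "card (\<Union>F \<inter> L) = 0" using c1 l2k assms(5) by linarith+
      have "\<Union>F \<inter> L = {}" using c2(2) fU by simp
      hence "\<Union>F = V - L" using eqV by blast
      moreover have "matching E F" using matching_of_card[OF F(1) E2 fF] c2 F by simp
      ultimately show ?thesis by simp
    qed
    have k1: "matching E E1" "\<Union>E1 = V - L" using key[OF s(1) s(5) cv(1)] by auto
    have k2: "matching E E2" "\<Union>E2 = V - L" using key[OF s(2) s(6) cv(2)] by auto
    have "(E1, E2) \<in> Mwl E wt w l"
      unfolding Mwl_def consistent_def using k1 k2 s k_def by auto
    moreover have "L = V - \<Union>E1" using k1 s by auto
    ultimately show "t \<in> (\<lambda>(M1, M2). (M1, M2, V - \<Union>M1)) ` Mwl E wt w l"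
      using t(1) by (intro image_eqI[of _ _ "(E1, E2)"]) auto
  next
    fix t assume "t \<in> (\<lambda>(M1, M2). (M1, M2, V - \<Union>M1)) ` Mwl E wt w l"
    then obtain M1 M2 where t: "t = (M1, M2, V - \<Union>M1)" "(M1, M2) \<in> Mwl E wt w l" by auto
    have m: "matching E M1" "matching E M2" "M1 \<inter> M2 = {}" "\<Union>M1 = \<Union>M2"
      "card M1 = k" "card M2 = k" "wsum wt (M1 \<union> M2) = w"
      using t(2) unfolding Mwl_def consistent_def k_def by auto
    have sE: "M1 \<subseteq> E" "M2 \<subseteq> E" using m unfolding matching_def by auto
    have fM: "finite M1" using sE fE finite_subset by blast
    have cU: "card (\<Union>M1) = 2 * k" using card_Union_matching[OF m(1) E2 fM] m by simp
    have UV: "\<Union>M1 \<subseteq> V" using UE sE by auto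
    have "card (V - \<Union>M1) = n - l" using card_Diff_subset[OF finite_subset[OF UV finV] UV] cardV cU l2k
      by simp
    hence "(M1, M2, V - \<Union>M1) \<in> T"
      unfolding T_def tpl_def del using sE m by auto
    moreover have "cover (M1, M2, V - \<Union>M1)" unfolding cover_def using m by auto
    ultimately show "t \<in> {t\<in>T. cover t}" using t by simp
  qed
  also have "card ((\<lambda>(M1, M2). (M1, M2, V - \<Union>M1)) ` Mwl E wt w l) = card (Mwl E wt w l)"
    by (rule card_image) (auto simp: inj_on_def)
  finally show ?thesis unfolding k_def by simp
qed

end
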